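(* Let $b$ be a geodesic ray (from $\mathfrak o$) in a proper CAT(0) space $X$ and suppose there is a constant $M$ such that every $(32,0)$--quasi-geodesic segment with both end points on $b$ lies in $\mathcal N_\kappa(b,M)$. Then $b$ is $\kappa$--contracting with contracting constant $c_b=82000\,M$.
   Context: $\|x\|=d_X(\mathfrak o,x)$; $\kappa:[0,\infty)\to[1,\infty)$ is monotone increasing, concave and sublinear, $\kappa(x):=\kappa(\|x\|)$. $\mathcal N_\kappa(Z,n)=\{x: d_X(x,Z)\le n\kappa(x)\}$. A $(q,Q)$--quasi-geodesic is a continuous map from an interval with $\frac1q|s-t|-Q\le d(\beta(s),\beta(t))\le q|s-t|+Q$. A closed set $Z$ is $\kappa$--contracting with constant $c_Z$ if for all $x,y$ with $d_X(x,y)\le d_X(x,Z)$, $\operatorname{diam}(x_Z\cup y_Z)\le c_Z\kappa(x)$, where $x_Z$ is the set of nearest points of $Z$ to $x$. *)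

theory Defs
  imports "HOL-Analysis.Analysis"
begin

definition proper_metric :: "'a::metric_space itself \<Rightarrow> bool" where
  "proper_metric _ \<longleftrightarrow> (\<forall>(x::'a) r. compact (cball x r))"

definition geodesic_between :: "(real \<Rightarrow> 'a::metric_space) \<Rightarrow> 'a \<Rightarrow> 'a \<Rightarrow> bool" where
  "geodesic_between g x y \<longleftrightarrow> g 0 = x \<and> g (dist x y) = y \<and>
     (\<forall>s\<in>{0..dist x y}. \<forall>t\<in>{0..dist x y}. dist (g s) (g t) = \<bar>s - t\<bar>)"

definition geodesic_space :: "'a::metric_space itself \<Rightarrow> bool" where
  "geodesic_space _ \<longleftrightarrow> (\<forall>x y::'a. \<exists>g. geodesic_between g x y)"

text \<open>Pairs (point on a side of the geodesic triangle, corresponding point on the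
  comparison triangle xb yb zb in the Euclidean plane (here: complex numbers)).\<close>
definition comparison_pairs ::
  "(real \<Rightarrow> 'a::metric_space) \<Rightarrow> (real \<Rightarrow> 'a) \<Rightarrow> (real \<Rightarrow> 'a) \<Rightarrow> 'a \<Rightarrow> 'a \<Rightarrow> 'a
     \<Rightarrow> complex \<Rightarrow> complex \<Rightarrow> complex \<Rightarrow> ('a \<times> complex) set" where
  "comparison_pairs g1 g2 g3 x y z xb yb zb =
     {(g1 s, xb + (s / dist x y) *\<^sub>R (yb - xb)) | s. s \<in> {0..dist x y}} \<union>
     {(g2 s, yb + (s / dist y z) *\<^sub>R (zb - yb)) | s. s \<in> {0..dist y z}} \<union>
     {(g3 s, zb + (s / dist z x) *\<^sub>R (xb - zb)) | s. s \<in> {0..dist z x}}"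

definition CAT0 :: "'a::metric_space itself \<Rightarrow> bool" where
  "CAT0 T \<longleftrightarrow> geodesic_space T \<and>
     (\<forall>(x::'a) y z g1 g2 g3 (xb::complex) yb zb.
        geodesic_between g1 x y \<and> geodesic_between g2 y z \<and> geodesic_between g3 z x \<and>
        dist xb yb = dist x y \<and> dist yb zb = dist y z \<and> dist zb xb = dist z x \<longrightarrow>
        (\<forall>(p, pb)\<in>comparison_pairs g1 g2 g3 x y z xb yb zb.
           \<forall>(q, qb)\<in>comparison_pairs g1 g2 g3 x y z xb yb zb. dist p q \<le> dist pb qb))"

definition geodesic_ray :: "(real \<Rightarrow> 'a::metric_space) \<Rightarrow> 'a \<Rightarrow> bool" where
  "geodesic_ray b bp \<longleftrightarrow> b 0 = bp \<and> (\<forall>s\<ge>0. \<forall>t\<ge>0. dist (b s) (b t) = \<bar>s - t\<bar>)"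

definition sublinear_fn :: "(real \<Rightarrow> real) \<Rightarrow> bool" where
  "sublinear_fn \<kappa> \<longleftrightarrow> (\<forall>t\<ge>0. \<kappa> t \<ge> 1) \<and> mono_on {0..} \<kappa> \<and> concave_on {0..} \<kappa> \<and>
     ((\<lambda>t. \<kappa> t / t) \<longlongrightarrow> 0) at_top"

definition kappa_nbhd :: "(real \<Rightarrow> real) \<Rightarrow> 'a::metric_space \<Rightarrow> 'a set \<Rightarrow> real \<Rightarrow> 'a set" where
  "kappa_nbhd \<kappa> bp Z n = {x. infdist x Z \<le> n * \<kappa> (dist bp x)}"

definition quasi_geodesic_on :: "real \<Rightarrow> real \<Rightarrow> real set \<Rightarrow> (real \<Rightarrow> 'a::metric_space) \<Rightarrow> bool" where
  "quasi_geodesic_on q Q I \<beta> \<longleftrightarrow> is_interval I \<and> continuous_on I \<beta> \<and>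
     (\<forall>s\<in>I. \<forall>t\<in>I. \<bar>s - t\<bar> / q - Q \<le> dist (\<beta> s) (\<beta> t) \<and> dist (\<beta> s) (\<beta> t) \<le> q * \<bar>s - t\<bar> + Q)"

definition nearest_points :: "'a::metric_space \<Rightarrow> 'a set \<Rightarrow> 'a set" where
  "nearest_points x Z = {z \<in> Z. dist x z = infdist x Z}"

definition kappa_contracting :: "(real \<Rightarrow> real) \<Rightarrow> 'a::metric_space \<Rightarrow> 'a set \<Rightarrow> real \<Rightarrow> bool" where
  "kappa_contracting \<kappa> bp Z c \<longleftrightarrow> closed Z \<and>
     (\<forall>x y. dist x y \<le> infdist x Z \<longrightarrow>
        diameter (nearest_points x Z \<union> nearest_points y Z) \<le> c * \<kappa> (dist bp x))"

end

theory Submission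
  imports Defs
begin


lemma isom_cont:
  assumes "\<forall>s\<in>I. \<forall>t\<in>I. dist (f s) (f t) = \<bar>s - t\<bar>"
  shows "continuous_on I f"
proof (rule lipschitz_on_continuous_on[where L=1])
  show "1-lipschitz_on I f" using assms by (auto simp: lipschitz_on_def dist_real_def)
qed

lemma geod_cont: "geodesic_between g x y \<Longrightarrow> continuous_on {0..dist x y} g"
  by (rule isom_cont) (auto simp: geodesic_between_def)

lemma comparison_sqrt:
  fixes A B d :: real
  assumes "d > 0" "A \<ge> 0" "B \<ge> 0" "B \<le> A + d" "A \<le> B + d" "d \<le> A + B"
  shows "((d\<^sup>2 + A\<^sup>2 - B\<^sup>2)/(2*d))\<^sup>2 \<le> A\<^sup>2"
proof -
  have h1: "\<bar>d\<^sup>2 + A\<^sup>2 - B\<^sup>2\<bar> \<le> 2*d*A"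
  proof -
    have "(d - A)\<^sup>2 \<le> B\<^sup>2" using assms by (intro power2_le_iff_abs_le[THEN iffD2]) auto
    moreover have "B\<^sup>2 \<le> (d + A)\<^sup>2" using assms by (intro power_mono) auto
    ultimately show ?thesis by (auto simp: power2_eq_square algebra_simps abs_le_iff)
  qed
  have "\<bar>(d\<^sup>2 + A\<^sup>2 - B\<^sup>2)/(2*d)\<bar> \<le> A" using h1 assms by (simp add: abs_div pos_divide_le_eq mult.commute)
  then show ?thesis using assms by (metis abs_le_square_iff abs_of_nonneg)
qed

lemma CN:
  fixes z :: "'a::metric_space"
  assumes cat: "CAT0 TYPE('a)" and g: "geodesic_between g a c" and s: "0 \<le> s" "s \<le> dist a c"
  shows "(dist z (g s))\<^sup>2 \<le> (1 - s/dist a c) * (dist z a)\<^sup>2 + (s/dist a c)*(dist z c)\<^sup>2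
           - (s/dist a c)*(1 - s/dist a c)*(dist a c)\<^sup>2"
proof (cases "dist a c = 0")
  case True
  then have "s = 0" using s by auto
  then show ?thesis using g True by (simp add: geodesic_between_def)
next
  case False
  define d where "d = dist a c"
  define A where "A = dist z a"
  define B where "B = dist c z"
  have dpos: "d > 0" using False d_def by auto
  have gs: "\<forall>x y::'a. \<exists>g. geodesic_between g x y" using cat by (simp add: CAT0_def geodesic_space_def)
  obtain g2 where g2: "geodesic_between g2 c z" using gs by blast
  obtain g3 where g3: "geodesic_between g3 z a" using gs by blast
  define \<alpha> where "\<alpha> = (d\<^sup>2 + A\<^sup>2 - B\<^sup>2)/(2*d)"
  define \<beta> where "\<beta> = sqrt (A\<^sup>2 - \<alpha>\<^sup>2)"
  have tri: "B \<le> A + d" "A \<le> B + d" "d \<le> A + B"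
    using dist_triangle[of c z a] dist_triangle[of z a c] dist_triangle[of a c z]
    by (auto simp: A_def B_def d_def dist_commute)
  have Apos: "A \<ge> 0" "B \<ge> 0" by (auto simp: A_def B_def)
  have al: "\<alpha>\<^sup>2 \<le> A\<^sup>2" unfolding \<alpha>_def using comparison_sqrt[OF dpos Apos tri] .
  have b2: "\<beta>\<^sup>2 = A\<^sup>2 - \<alpha>\<^sup>2" using al by (simp add: \<beta>_def)
  define xb :: complex where "xb = 0"
  define yb :: complex where "yb = complex_of_real d"
  define zb :: complex where "zb = Complex \<alpha> \<beta>"
  have e1: "dist xb yb = dist a c" using dpos by (simp add: xb_def yb_def d_def)
  have e2: "dist yb zb = dist c z"
  proof -
    have "dist yb zb = sqrt ((d - \<alpha>)\<^sup>2 + \<beta>\<^sup>2)"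
      by (simp add: yb_def zb_def dist_norm cmod_def complex_of_real_def)
    also have "(d - \<alpha>)\<^sup>2 + \<beta>\<^sup>2 = B\<^sup>2"
      using dpos unfolding b2 \<alpha>_def by (simp add: field_simps power2_eq_square)
    finally show ?thesis using Apos by (simp add: B_def)
  qed
  have e3: "dist zb xb = dist z a"
  proof -
    have "dist zb xb = sqrt (\<alpha>\<^sup>2 + \<beta>\<^sup>2)"
      by (simp add: xb_def zb_def dist_norm cmod_def)
    also have "\<alpha>\<^sup>2 + \<beta>\<^sup>2 = A\<^sup>2" using b2 by simp
    finally show ?thesis using Apos by (simp add: A_def)
  qed
  have mem1: "(g s, xb + (s / dist a c) *\<^sub>R (yb - xb)) \<in> comparison_pairs g g2 g3 a c z xb yb zb"
    using s unfolding comparison_pairs_def by (intro UnI1) auto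
  have "g3 0 = z" using g3 by (simp add: geodesic_between_def)
  then have mem2: "(z, zb + (0 / dist z a) *\<^sub>R (xb - zb)) \<in> comparison_pairs g g2 g3 a c z xb yb zb"
    unfolding comparison_pairs_def by force
  have "dist (g s) z \<le> dist (xb + (s / dist a c) *\<^sub>R (yb - xb)) (zb + (0 / dist z a) *\<^sub>R (xb - zb))"
    using cat g g2 g3 e1 e2 e3 mem1 mem2 unfolding CAT0_def by fast
  also have "\<dots> = sqrt ((s - \<alpha>)\<^sup>2 + \<beta>\<^sup>2)"
    using dpos by (simp add: xb_def yb_def zb_def d_def dist_norm cmod_def complex_of_real_def scaleR_conv_of_real)
  finally have le: "dist (g s) z \<le> sqrt ((s - \<alpha>)\<^sup>2 + \<beta>\<^sup>2)" .
  have "(dist z (g s))\<^sup>2 \<le> (s - \<alpha>)\<^sup>2 + \<beta>\<^sup>2"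
  proof -
    have "(dist z (g s))\<^sup>2 \<le> (sqrt ((s - \<alpha>)\<^sup>2 + \<beta>\<^sup>2))\<^sup>2"
      using le by (intro power_mono) (auto simp: dist_commute)
    then show ?thesis by simp
  qed
  also have "(s - \<alpha>)\<^sup>2 + \<beta>\<^sup>2 = (1 - s/d) * A\<^sup>2 + (s/d)*B\<^sup>2 - (s/d)*(1 - s/d)*d\<^sup>2"
    using dpos unfolding b2 \<alpha>_def by (simp add: field_simps power2_eq_square)
  finally show ?thesis by (simp add: A_def B_def d_def dist_commute)
qed



lemma right_angle:
  fixes f :: "real \<Rightarrow> 'a::metric_space" and u :: 'a
  assumes cat: "CAT0 TYPE('a)"
    and iso: "\<forall>s\<in>I. \<forall>t\<in>I. dist (f s) (f t) = \<bar>s - t\<bar>"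
    and seg: "{min r0 r1..max r0 r1} \<subseteq> I"
    and near: "\<forall>r\<in>I. dist u (f r0) \<le> dist u (f r)"
  shows "(dist u (f r0))\<^sup>2 + (r1 - r0)\<^sup>2 \<le> (dist u (f r1))\<^sup>2"
proof (cases "r0 = r1")
  case True then show ?thesis by simp
next
  case False
  define e :: real where "e = (if r0 \<le> r1 then 1 else -1)"
  define g where "g = (\<lambda>s. f (r0 + e * s))"
  define \<delta> where "\<delta> = \<bar>r1 - r0\<bar>"
  have dpos: "\<delta> > 0" using False by (simp add: \<delta>_def)
  have r0I: "r0 \<in> I" "r1 \<in> I" using seg by auto
  have dd: "dist (f r0) (f r1) = \<delta>" using iso r0I by (simp add: \<delta>_def abs_minus_commute)
  have inseg: "r0 + e * s \<in> I" if "0 \<le> s" "s \<le> \<delta>" for s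
    using that seg by (auto simp: e_def \<delta>_def subset_iff)
  have geo: "geodesic_between g (f r0) (f r1)"
    unfolding geodesic_between_def dd
  proof (intro conjI ballI)
    show "g 0 = f r0" by (simp add: g_def)
    show "g \<delta> = f r1" by (simp add: g_def e_def \<delta>_def)
    fix s t assume "s \<in> {0..\<delta>}" "t \<in> {0..\<delta>}"
    then have "dist (g s) (g t) = abs ((r0 + e * s) - (r0 + e * t))"
      using iso inseg by (simp add: g_def)
    also have "\<dots> = \<bar>s - t\<bar>" by (simp add: e_def abs_minus_commute)
    finally show "dist (g s) (g t) = \<bar>s - t\<bar>" .
  qed
  define a where "a = dist u (f r0)"
  define c where "c = dist u (f r1)"
  have key: "a\<^sup>2 \<le> c\<^sup>2 - (1 - l) * \<delta>\<^sup>2" if l: "0 < l" "l \<le> 1" for l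
  proof -
    have s: "0 \<le> l * \<delta>" "l * \<delta> \<le> \<delta>" using l dpos by (auto simp: mult_le_cancel_right1)
    have ls: "l * \<delta> / \<delta> = l" using dpos by simp
    have "(dist u (g (l*\<delta>)))\<^sup>2 \<le> (1 - l) * a\<^sup>2 + l * c\<^sup>2 - l * (1 - l) * \<delta>\<^sup>2"
      using CN[OF cat geo, of "l*\<delta>" u] s by (simp add: dd ls a_def c_def)
    moreover have "a \<le> dist u (g (l*\<delta>))" using near inseg[OF s] by (simp add: a_def g_def)
    then have "a\<^sup>2 \<le> (dist u (g (l*\<delta>)))\<^sup>2" by (intro power_mono) (auto simp: a_def)
    ultimately have "l * a\<^sup>2 \<le> l * (c\<^sup>2 - (1 - l) * \<delta>\<^sup>2)" by (simp add: algebra_simps)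
    then show ?thesis using l by simp
  qed
  show ?thesis
  proof (rule ccontr)
    assume "\<not> ?thesis"
    then have eps: "a\<^sup>2 + \<delta>\<^sup>2 - c\<^sup>2 > 0" by (simp add: a_def c_def \<delta>_def)
    define l where "l = min 1 ((a\<^sup>2 + \<delta>\<^sup>2 - c\<^sup>2) / (2 * \<delta>\<^sup>2))"
    have l: "0 < l" "l \<le> 1" using eps dpos by (auto simp: l_def)
    have "l * \<delta>\<^sup>2 \<le> (a\<^sup>2 + \<delta>\<^sup>2 - c\<^sup>2) / 2"
    proof -
      have "l * \<delta>\<^sup>2 \<le> ((a\<^sup>2 + \<delta>\<^sup>2 - c\<^sup>2) / (2 * \<delta>\<^sup>2)) * \<delta>\<^sup>2"
        by (intro mult_right_mono) (auto simp: l_def)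
      also have "\<dots> = (a\<^sup>2 + \<delta>\<^sup>2 - c\<^sup>2) / 2" using dpos by (simp add: field_simps)
      finally show ?thesis .
    qed
    with key[OF l] eps show False by (simp add: algebra_simps)
  qed
qed



lemma two_piece_qg:
  fixes c G :: "real \<Rightarrow> 'a::metric_space"
  assumes isoc: "\<forall>s\<in>{0..A}. \<forall>t\<in>{0..A}. dist (c s) (c t) = \<bar>s - t\<bar>"
    and isoG: "\<forall>s\<in>{0..l}. \<forall>t\<in>{0..l}. dist (G s) (G t) = \<bar>s - t\<bar>"
    and s0: "0 \<le> s0" "s0 \<le> l" and A: "0 \<le> A" and join: "c A = G s0"
    and ra: "\<And>\<sigma> s1. 0 \<le> \<sigma> \<Longrightarrow> \<sigma> \<le> A \<Longrightarrow> s0 \<le> s1 \<Longrightarrow> s1 \<le> l \<Longrightarrow>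
              (A - \<sigma>)\<^sup>2 + (s1 - s0)\<^sup>2 \<le> (dist (c \<sigma>) (G s1))\<^sup>2"
  shows "quasi_geodesic_on 32 0 {0..A + (l - s0)} (\<lambda>\<sigma>. if \<sigma> \<le> A then c \<sigma> else G (s0 + (\<sigma> - A)))"
proof -
  define \<beta> where "\<beta> = (\<lambda>\<sigma>. if \<sigma> \<le> A then c \<sigma> else G (s0 + (\<sigma> - A)))"
  define T where "T = A + (l - s0)"
  have b2: "\<beta> \<sigma> = G (s0 + (\<sigma> - A))" if "A \<le> \<sigma>" for \<sigma>
    using that join by (cases "\<sigma> = A") (auto simp: \<beta>_def)
  have cont: "continuous_on {0..T} \<beta>"
  proof -
    have "{0..T} = {0..A} \<union> {A..T}" using A s0 by (auto simp: T_def)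
    moreover have "continuous_on {0..A} \<beta>"
      using isom_cont[OF isoc] by (rule continuous_on_eq) (auto simp: \<beta>_def)
    moreover have "continuous_on {A..T} \<beta>"
    proof -
      have "continuous_on {A..T} (\<lambda>\<sigma>. s0 + (\<sigma> - A))" by (intro continuous_intros)
      moreover have "(\<lambda>\<sigma>. s0 + (\<sigma> - A)) ` {A..T} \<subseteq> {0..l}" using s0 by (auto simp: T_def)
      ultimately have "continuous_on {A..T} (G \<circ> (\<lambda>\<sigma>. s0 + (\<sigma> - A)))"
        using isom_cont[OF isoG] by (intro continuous_on_compose) (auto intro: continuous_on_subset)
      then show ?thesis by (rule continuous_on_eq) (auto simp: b2)
    qed
    ultimately show ?thesis by (metis continuous_on_closed_Un closed_atLeastAtMost)
  qed
  have bounds: "\<bar>\<sigma> - \<tau>\<bar> / 2 \<le> dist (\<beta> \<sigma>) (\<beta> \<tau>) \<and> dist (\<beta> \<sigma>) (\<beta> \<tau>) \<le> \<bar>\<sigma> - \<tau>\<bar>"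
    if st: "\<sigma> \<in> {0..T}" "\<tau> \<in> {0..T}" "\<sigma> \<le> \<tau>" for \<sigma> \<tau>
  proof (cases "\<tau> \<le> A")
    case True
    then have "dist (\<beta> \<sigma>) (\<beta> \<tau>) = \<bar>\<sigma> - \<tau>\<bar>" using st isoc by (auto simp: \<beta>_def)
    then show ?thesis by simp
  next
    case tA: False
    show ?thesis
    proof (cases "A \<le> \<sigma>")
      case True
      have "dist (\<beta> \<sigma>) (\<beta> \<tau>) = \<bar>(s0 + (\<sigma> - A)) - (s0 + (\<tau> - A))\<bar>"
        using st isoG True tA s0 by (simp add: b2 T_def)
      then show ?thesis by simp
    next
      case sA: False
      define s1 where "s1 = s0 + (\<tau> - A)"
      have s1: "s0 \<le> s1" "s1 \<le> l" using tA st by (auto simp: s1_def T_def)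
      have bs: "\<beta> \<sigma> = c \<sigma>" "\<beta> \<tau> = G s1" using sA tA by (auto simp: \<beta>_def s1_def)
      have r: "(A - \<sigma>)\<^sup>2 + (s1 - s0)\<^sup>2 \<le> (dist (c \<sigma>) (G s1))\<^sup>2"
        using ra[of \<sigma> s1] st sA s1 by auto
      have d1: "dist (c \<sigma>) (G s0) = A - \<sigma>" using isoc st sA A join[symmetric] by auto
      have d2: "dist (G s0) (G s1) = s1 - s0" using isoG s0 s1 by auto
      have up: "dist (c \<sigma>) (G s1) \<le> \<tau> - \<sigma>"
        using dist_triangle[of "c \<sigma>" "G s1" "G s0"] d1 d2 by (simp add: s1_def)
      have lo: "(\<tau> - \<sigma>) / 2 \<le> dist (c \<sigma>) (G s1)"
      proof -
        have "((\<tau> - \<sigma>)/2)\<^sup>2 \<le> (A - \<sigma>)\<^sup>2 + (s1 - s0)\<^sup>2"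
        proof -
          have "0 \<le> (A - \<sigma> - (\<tau> - A))\<^sup>2" by simp
          moreover have "0 \<le> (A - \<sigma>)\<^sup>2 + (\<tau> - A)\<^sup>2" by simp
          ultimately show ?thesis by (simp add: s1_def power2_eq_square field_simps)
        qed
        also note r
        finally have "((\<tau> - \<sigma>)/2)\<^sup>2 \<le> (dist (c \<sigma>) (G s1))\<^sup>2" .
        then show ?thesis by (rule power2_le_imp_le) simp
      qed
      show ?thesis using up lo st by (simp add: bs)
    qed
  qed
  show ?thesis unfolding quasi_geodesic_on_def \<beta>_def[symmetric] T_def[symmetric]
  proof (intro conjI ballI)
    show "is_interval {0..T}" by (rule is_interval_cc)
    show "continuous_on {0..T} \<beta>" by (rule cont)
    fix s t assume st: "s \<in> {0..T}" "t \<in> {0..T}"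
    have "\<bar>s - t\<bar> / 2 \<le> dist (\<beta> s) (\<beta> t) \<and> dist (\<beta> s) (\<beta> t) \<le> \<bar>s - t\<bar>"
      using bounds[OF st] bounds[OF st(2,1)] by (cases "s \<le> t") (auto simp: dist_commute abs_minus_commute)
    then show "\<bar>s - t\<bar> / 32 - 0 \<le> dist (\<beta> s) (\<beta> t)" "dist (\<beta> s) (\<beta> t) \<le> 32 * \<bar>s - t\<bar> + 0"
      by auto
  qed
qed



lemma ray_iso: "geodesic_ray b bp \<Longrightarrow> \<forall>s\<in>{0..}. \<forall>t\<in>{0..}. dist (b s) (b t) = \<bar>s - t\<bar>"
  by (auto simp: geodesic_ray_def)

lemma ray_right:
  fixes b :: "real \<Rightarrow> 'a::metric_space"
  assumes cat: "CAT0 TYPE('a)" and ray: "geodesic_ray b bp"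
    and near: "\<forall>z\<in>b ` {0..}. dist w p \<le> dist w z"
    and pZ: "p \<in> b ` {0..}" and zZ: "z \<in> b ` {0..}"
  shows "(dist w p)\<^sup>2 + (dist p z)\<^sup>2 \<le> (dist w z)\<^sup>2"
proof -
  obtain r0 r1 where r: "r0 \<ge> 0" "r1 \<ge> 0" "p = b r0" "z = b r1" using pZ zZ by auto
  have "(dist w (b r0))\<^sup>2 + (r1 - r0)\<^sup>2 \<le> (dist w (b r1))\<^sup>2"
    by (rule right_angle[OF cat ray_iso[OF ray]]) (use r near in auto)
  moreover have "dist p z = \<bar>r0 - r1\<bar>" using ray r by (simp add: geodesic_ray_def)
  ultimately show ?thesis using r by (simp add: power2_abs power2_commute)
qed

lemma witness:
  fixes b :: "real \<Rightarrow> 'a::metric_space" and bp :: 'a and \<kappa> :: "real \<Rightarrow> real" and M :: real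
  assumes cat: "CAT0 TYPE('a)" and ray: "geodesic_ray b bp"
    and H: "\<And>\<beta> s t. s \<le> t \<Longrightarrow> quasi_geodesic_on 32 0 {s..t} \<beta> \<Longrightarrow>
           \<beta> s \<in> b ` {0..} \<Longrightarrow> \<beta> t \<in> b ` {0..} \<Longrightarrow>
           \<beta> ` {s..t} \<subseteq> kappa_nbhd \<kappa> bp (b ` {0..}) M"
    and pZ: "p \<in> b ` {0..}" and qZ: "q \<in> b ` {0..}"
    and nearw: "\<forall>z\<in>b ` {0..}. dist w p \<le> dist w z"
    and hpos: "dist w p > 0"
    and rho0: "0 \<le> \<rho>0" "2 * \<rho>0 \<le> dist w p + dist p q - dist w q"
  shows "\<exists>x'. dist bp x' \<le> dist bp p + dist w p \<and> \<rho>0\<^sup>2 \<le> 3 * dist w p * (M * \<kappa> (dist bp x'))"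
proof -
  define Z where "Z = b ` {0..}"
  define h where "h = dist w p"
  define L where "L = dist p q"
  define l where "l = dist w q"
  have gs: "\<forall>x y::'a. \<exists>g. geodesic_between g x y" using cat by (simp add: CAT0_def geodesic_space_def)
  obtain G where G: "geodesic_between G w q" using gs by blast
  have isoG: "\<forall>s\<in>{0..l}. \<forall>t\<in>{0..l}. dist (G s) (G t) = \<bar>s - t\<bar>" using G by (simp add: geodesic_between_def l_def)
  have G0: "G 0 = w" and Gl: "G l = q" using G by (auto simp: geodesic_between_def l_def)
  obtain s0 where s0: "s0 \<in> {0..l}" and foot: "\<forall>s\<in>{0..l}. dist p (G s0) \<le> dist p (G s)"
  proof -
    have "continuous_on {0..l} (\<lambda>s. dist p (G s))"
      using geod_cont[OF G] by (intro continuous_intros) (simp add: l_def)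
    then have "\<exists>s0\<in>{0..l}. \<forall>s\<in>{0..l}. dist p (G s0) \<le> dist p (G s)"
      by (intro continuous_attains_inf) (auto simp: l_def)
    then show ?thesis using that by blast
  qed
  define x' where "x' = G s0"
  define \<rho> where "\<rho> = dist p x'"
  have ra1: "\<rho>\<^sup>2 + (0 - s0)\<^sup>2 \<le> h\<^sup>2"
  proof -
    have seg: "{min s0 0..max s0 0} \<subseteq> {0..l}" using s0 by auto
    have "(dist p (G s0))\<^sup>2 + (0 - s0)\<^sup>2 \<le> (dist p (G 0))\<^sup>2"
      by (rule right_angle[OF cat isoG seg foot])
    then show ?thesis using G0 by (simp add: \<rho>_def x'_def h_def dist_commute)
  qed
  have rh: "\<rho> \<le> h" "s0 \<le> h"
  proof -
    have a: "\<rho>\<^sup>2 + s0\<^sup>2 \<le> h\<^sup>2" using ra1 by simp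
    have "\<rho>\<^sup>2 \<le> h\<^sup>2" "s0\<^sup>2 \<le> h\<^sup>2" using a zero_le_power2[of \<rho>] zero_le_power2[of s0] by linarith+
    then show "\<rho> \<le> h" "s0 \<le> h" using s0 by (auto simp: h_def \<rho>_def intro: power2_le_imp_le)
  qed
  have dwx: "dist w x' = s0"
  proof -
    have "dist (G 0) (G s0) = \<bar>0 - s0\<bar>" using isoG s0 by auto
    then show ?thesis using G0 s0 by (simp add: x'_def)
  qed
  have dxq: "dist x' q = l - s0" using isoG s0 Gl by (auto simp: x'_def)
  have rho_ge: "\<rho>0 \<le> \<rho>"
  proof -
    have "h \<le> s0 + \<rho>" using dist_triangle[of w p x'] dwx by (simp add: h_def \<rho>_def dist_commute)
    moreover have "L \<le> \<rho> + (l - s0)" using dist_triangle[of p q x'] dxq by (simp add: L_def \<rho>_def)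
    ultimately show ?thesis using rho0 by (simp add: h_def L_def l_def)
  qed
  have lowz: "\<rho>\<^sup>2 / (3*h) \<le> dist x' z" if zZ: "z \<in> Z" for z
  proof -
    define \<epsilon> where "\<epsilon> = dist x' z"
    have hp: "h > 0" using hpos by (simp add: h_def)
    show ?thesis
    proof (cases "\<rho> \<le> \<epsilon>")
      case True
      have rn: "0 \<le> \<rho>" by (simp add: \<rho>_def)
      have "\<rho> * \<rho> \<le> \<rho> * (h * 3)" using rh hp rn by (intro mult_left_mono) auto
      then have "\<rho>\<^sup>2 / (3*h) \<le> \<rho>" using hp by (simp add: power2_eq_square field_simps)
      then show ?thesis using True by (simp add: \<epsilon>_def)
    next
      case False
      have P: "h\<^sup>2 + (dist p z)\<^sup>2 \<le> (dist w z)\<^sup>2"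
        using ray_right[OF cat ray nearw pZ] zZ by (simp add: Z_def h_def)
      have pz: "\<rho> - \<epsilon> \<le> dist p z" using dist_triangle[of p x' z] by (simp add: \<rho>_def \<epsilon>_def dist_commute)
      have wz: "dist w z \<le> s0 + \<epsilon>" using dist_triangle[of w z x'] dwx by (simp add: \<epsilon>_def dist_commute)
      have e0: "0 \<le> \<epsilon>" by (simp add: \<epsilon>_def)
      have "(\<rho> - \<epsilon>)\<^sup>2 \<le> (dist p z)\<^sup>2" using pz False by (intro power_mono) auto
      moreover have "(dist w z)\<^sup>2 \<le> (s0 + \<epsilon>)\<^sup>2" using wz by (intro power_mono) auto
      ultimately have i1: "h\<^sup>2 + (\<rho> - \<epsilon>)\<^sup>2 \<le> (s0 + \<epsilon>)\<^sup>2" using P by linarith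
      have i2: "\<rho>\<^sup>2 + s0\<^sup>2 \<le> h\<^sup>2" using ra1 by simp
      have i3: "0 \<le> (\<rho> - \<epsilon>)\<^sup>2" by simp
      have "(s0 + \<epsilon>)\<^sup>2 = s0\<^sup>2 + 2* s0*\<epsilon> + \<epsilon>\<^sup>2" by (simp add: power2_eq_square algebra_simps)
      then have "\<rho>\<^sup>2 \<le> 2* s0*\<epsilon> + \<epsilon>\<^sup>2" using i1 i2 i3 by linarith
      also have "\<dots> \<le> 3*h*\<epsilon>"
      proof -
        have "2* s0*\<epsilon> \<le> 2*h*\<epsilon>" using rh e0 by (simp add: mult_right_mono)
        moreover have "\<epsilon>\<^sup>2 \<le> h*\<epsilon>" using False rh e0 by (simp add: power2_eq_square mult_right_mono)
        ultimately show ?thesis by linarith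
      qed
      finally show ?thesis using hp by (simp add: \<epsilon>_def field_simps)
    qed
  qed
  have Zne: "Z \<noteq> {}" by (auto simp: Z_def)
  have inf_lo: "\<rho>\<^sup>2 / (3*h) \<le> infdist x' Z"
    unfolding infdist_notempty[OF Zne] by (rule cINF_greatest[OF Zne lowz])
  obtain c where c: "geodesic_between c p x'" using gs by blast
  have isoc: "\<forall>s\<in>{0..\<rho>}. \<forall>t\<in>{0..\<rho>}. dist (c s) (c t) = \<bar>s - t\<bar>" using c by (simp add: geodesic_between_def \<rho>_def)
  have c0: "c 0 = p" and c\<rho>: "c \<rho> = x'" using c by (auto simp: geodesic_between_def \<rho>_def)
  have ra: "(\<rho> - \<sigma>)\<^sup>2 + (s1 - s0)\<^sup>2 \<le> (dist (c \<sigma>) (G s1))\<^sup>2"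
    if "0 \<le> \<sigma>" "\<sigma> \<le> \<rho>" "s0 \<le> s1" "s1 \<le> l" for \<sigma> s1
  proof -
    have dv: "dist (c \<sigma>) (G s0) = \<rho> - \<sigma>"
    proof -
      have "dist (c \<sigma>) (c \<rho>) = \<bar>\<sigma> - \<rho>\<bar>" using isoc that by auto
      then show ?thesis using c\<rho> that by (simp add: x'_def)
    qed
    have dpv: "dist p (c \<sigma>) = \<sigma>"
    proof -
      have "0 \<le> \<rho>" by (simp add: \<rho>_def)
      then have "dist (c 0) (c \<sigma>) = \<bar>0 - \<sigma>\<bar>" using isoc that by auto
      then show ?thesis using c0 that by simp
    qed
    have near: "\<forall>s\<in>{0..l}. dist (c \<sigma>) (G s0) \<le> dist (c \<sigma>) (G s)"
    proof
      fix s assume "s \<in> {0..l}"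
      then have "\<rho> \<le> dist p (G s)" using foot by (simp add: \<rho>_def x'_def)
      also have "\<dots> \<le> \<sigma> + dist (c \<sigma>) (G s)" using dist_triangle[of p "G s" "c \<sigma>"] dpv by simp
      finally show "dist (c \<sigma>) (G s0) \<le> dist (c \<sigma>) (G s)" using dv by simp
    qed
    have "(dist (c \<sigma>) (G s0))\<^sup>2 + (s1 - s0)\<^sup>2 \<le> (dist (c \<sigma>) (G s1))\<^sup>2"
    proof (rule right_angle[OF cat isoG _ near])
      show "{min s0 s1..max s0 s1} \<subseteq> {0..l}" using that s0 by auto
    qed
    then show ?thesis using dv by simp
  qed
  define \<beta> where "\<beta> = (\<lambda>\<sigma>. if \<sigma> \<le> \<rho> then c \<sigma> else G (s0 + (\<sigma> - \<rho>)))"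
  define T where "T = \<rho> + (l - s0)"
  have qg: "quasi_geodesic_on 32 0 {0..T} \<beta>"
    unfolding \<beta>_def T_def
  proof (rule two_piece_qg[OF isoc isoG])
    show "0 \<le> s0" "s0 \<le> l" using s0 by auto
    show "0 \<le> \<rho>" by (simp add: \<rho>_def)
    show "c \<rho> = G s0" using c\<rho> by (simp add: x'_def)
    show "(\<rho> - \<sigma>)\<^sup>2 + (s1 - s0)\<^sup>2 \<le> (dist (c \<sigma>) (G s1))\<^sup>2"
      if "0 \<le> \<sigma>" "\<sigma> \<le> \<rho>" "s0 \<le> s1" "s1 \<le> l" for \<sigma> s1 using ra[OF that] .
  qed
  have T0: "0 \<le> T" "\<rho> \<le> T" using s0 by (auto simp: T_def \<rho>_def)
  have bT: "\<beta> T = q"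
  proof (cases "l - s0 = 0")
    case True then show ?thesis using c\<rho> Gl by (simp add: \<beta>_def T_def x'_def)
  next
    case False then have "\<not> T \<le> \<rho>" using s0 by (simp add: T_def)
    then show ?thesis using Gl by (simp add: \<beta>_def T_def)
  qed
  have b0: "\<beta> 0 = p" using c0 by (simp add: \<beta>_def \<rho>_def)
  have "\<beta> ` {0..T} \<subseteq> kappa_nbhd \<kappa> bp Z M"
    using H[OF T0(1) qg] b0 bT pZ qZ by (simp add: Z_def)
  moreover have "\<beta> \<rho> = x'" using c\<rho> by (simp add: \<beta>_def)
  moreover have "\<rho> \<in> {0..T}" using T0 by (simp add: \<rho>_def)
  ultimately have "x' \<in> kappa_nbhd \<kappa> bp Z M" by (metis image_eqI subsetD)
  then have nb: "infdist x' Z \<le> M * \<kappa> (dist bp x')" by (simp add: kappa_nbhd_def)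
  have hp: "h > 0" using hpos by (simp add: h_def)
  have "\<rho>0\<^sup>2 \<le> \<rho>\<^sup>2" using rho_ge rho0 by (intro power_mono) auto
  also have "\<rho>\<^sup>2 \<le> 3*h*infdist x' Z" using inf_lo hp by (simp add: field_simps)
  also have "\<dots> \<le> 3*h*(M * \<kappa> (dist bp x'))" using nb hp by simp
  finally have f1: "\<rho>0\<^sup>2 \<le> 3 * h * (M * \<kappa> (dist bp x'))" .
  have "dist bp x' \<le> dist bp p + \<rho>" using dist_triangle[of bp x' p] by (simp add: \<rho>_def)
  then have "dist bp x' \<le> dist bp p + h" using rh by simp
  then show ?thesis using f1 by (auto simp: h_def)
qed



lemma tree_fail:
  fixes b :: "real \<Rightarrow> 'a::metric_space" and bp :: 'a and \<kappa> :: "real \<Rightarrow> real" and M :: real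
  assumes cat: "CAT0 TYPE('a)" and ray: "geodesic_ray b bp"
    and H: "\<And>\<beta> s t. s \<le> t \<Longrightarrow> quasi_geodesic_on 32 0 {s..t} \<beta> \<Longrightarrow>
           \<beta> s \<in> b ` {0..} \<Longrightarrow> \<beta> t \<in> b ` {0..} \<Longrightarrow>
           \<beta> ` {s..t} \<subseteq> kappa_nbhd \<kappa> bp (b ` {0..}) M"
    and pZ: "p \<in> b ` {0..}" and qZ: "q \<in> b ` {0..}"
    and nearu: "\<forall>z\<in>b ` {0..}. dist u p \<le> dist u z"
    and Lpos: "dist p q > 0"
    and short: "dist u q < dist u p + 7/8 * dist p q"
    and Mk: "\<And>r. 0 \<le> r \<Longrightarrow> 0 \<le> M * \<kappa> r"
  shows "\<exists>x'. dist bp x' \<le> dist bp p + dist u p \<and> dist p q \<le> 3072 * (M * \<kappa> (dist bp x'))"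
proof -
  define h where "h = dist u p"
  define L where "L = dist p q"
  have Lp: "L > 0" using Lpos by (simp add: L_def)
  have hp: "h > 0"
  proof (rule ccontr)
    assume "\<not> h > 0" then have "u = p" by (simp add: h_def)
    then show False using short Lpos by simp
  qed
  have fin: "L \<le> 3072 * (M * \<kappa> (dist bp x'))"
    if "(L/32)\<^sup>2 \<le> 3 * h' * (M * \<kappa> (dist bp x'))" "h' \<le> L" "0 < h'" for h' x'
  proof -
    have mk: "0 \<le> M * \<kappa> (dist bp x')" by (rule Mk) simp
    have "(L/32)\<^sup>2 \<le> 3 * L * (M * \<kappa> (dist bp x'))"
      using that(1) mult_right_mono[OF that(2) mk] by (simp only: mult.assoc)
    then have "L * L \<le> L * (3072 * (M * \<kappa> (dist bp x')))"
      by (simp add: power2_eq_square field_simps)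
    then show ?thesis using Lp by simp
  qed
  show ?thesis
  proof (cases "h \<le> L")
    case True
    obtain x' where x': "dist bp x' \<le> dist bp p + dist u p"
      "(L/32)\<^sup>2 \<le> 3 * dist u p * (M * \<kappa> (dist bp x'))"
    proof -
      have r: "2 * (L/32) \<le> dist u p + dist p q - dist u q" using short Lp zero_le_dist[of p q] unfolding L_def by linarith
      have "0 \<le> L/32" using Lp by simp
      from witness[OF cat ray H pZ qZ nearu _ this r] hp show ?thesis using that by (auto simp: h_def)
    qed
    then show ?thesis using fin[of h x'] True hp by (auto simp: h_def L_def)
  next
    case False
    have gs: "\<forall>x y::'a. \<exists>g. geodesic_between g x y" using cat by (simp add: CAT0_def geodesic_space_def)
    obtain c where c: "geodesic_between c p u" using gs by blast
    have isoc: "\<forall>s\<in>{0..h}. \<forall>t\<in>{0..h}. dist (c s) (c t) = \<bar>s - t\<bar>"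
      using c by (simp add: geodesic_between_def h_def dist_commute)
    have c0: "c 0 = p" and ch: "c h = u" using c by (auto simp: geodesic_between_def h_def dist_commute)
    define w where "w = c L"
    have Lh: "0 \<le> L" "L \<le> h" using False Lp by auto
    have dwp: "dist w p = L"
    proof -
      have "dist (c L) (c 0) = \<bar>L - 0\<bar>" using isoc Lh by auto
      then show ?thesis using c0 Lh by (simp add: w_def)
    qed
    have dwu: "dist w u = h - L"
    proof -
      have "dist (c L) (c h) = \<bar>L - h\<bar>" using isoc Lh by auto
      then show ?thesis using ch Lh by (simp add: w_def)
    qed
    have nearw: "\<forall>z\<in>b ` {0..}. dist w p \<le> dist w z"
    proof
      fix z assume z: "z \<in> b ` {0..}"
      have "h \<le> dist u z" using bspec[OF nearu z] by (simp add: h_def)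
      also have "\<dots> \<le> dist u w + dist w z" by (rule dist_triangle)
      finally show "dist w p \<le> dist w z" using dwp dwu by (simp add: dist_commute)
    qed
    have cn: "(dist q (c L))\<^sup>2 \<le> (1 - L/h) * (dist q p)\<^sup>2 + (L/h)*(dist q u)\<^sup>2 - (L/h)*(1 - L/h)*h\<^sup>2"
      using CN[OF cat c, of L q] Lh by (simp add: h_def dist_commute)
    have qu: "(dist q u)\<^sup>2 \<le> (h + 7/8*L)\<^sup>2"
      using short by (intro power_mono) (auto simp: h_def L_def dist_commute)
    have lam: "0 \<le> L/h" "L/h \<le> 1" using Lh hp by auto
    have "(dist q w)\<^sup>2 \<le> (1 - L/h) * L\<^sup>2 + (L/h)*(h + 7/8*L)\<^sup>2 - (L/h)*(1 - L/h)*h\<^sup>2"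
      using cn mult_left_mono[OF qu lam(1)] by (simp add: w_def L_def dist_commute)
    also have "\<dots> = 15/4 * L\<^sup>2 - 15/64 * (L/h) * L\<^sup>2"
      using hp by (simp add: field_simps power2_eq_square)
    also have "\<dots> \<le> (31/16 * L)\<^sup>2"
    proof -
      have a: "0 \<le> 15/64 * (L/h) * L\<^sup>2" using lam by (intro mult_nonneg_nonneg) auto
      have b: "(31/16*L)\<^sup>2 = 961/256 * L\<^sup>2" by (simp add: power2_eq_square)
      have c: "0 \<le> L\<^sup>2" by simp
      show ?thesis using a b c by linarith
    qed
    finally have sq: "(dist q w)\<^sup>2 \<le> (31/16 * L)\<^sup>2" .
    have "0 \<le> 31/16 * L" using Lh by simp
    with sq have "dist q w \<le> 31/16 * L" by (rule power2_le_imp_le)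
    then have rho: "2 * (L/32) \<le> dist w p + dist p q - dist w q"
      using dwp by (simp add: L_def dist_commute)
    obtain x' where x': "dist bp x' \<le> dist bp p + dist w p"
      "(L/32)\<^sup>2 \<le> 3 * dist w p * (M * \<kappa> (dist bp x'))"
    proof -
      have "0 \<le> L/32" using Lp by simp
      from witness[OF cat ray H pZ qZ nearw _ this rho] Lp dwp show ?thesis using that by auto
    qed
    have d1: "dist bp x' \<le> dist bp p + dist u p" using x'(1) dwp Lh by (simp add: h_def)
    have d2: "dist p q \<le> 3072 * (M * \<kappa> (dist bp x'))" using fin[of L x'] x'(2) Lp dwp Lh by (simp add: L_def)
    show ?thesis using d1 d2 by blast
  qed
qed



lemma kappa6:
  assumes k: "sublinear_fn \<kappa>" and r: "0 \<le> r" "0 \<le> r'" "r' \<le> 6 * r"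
  shows "\<kappa> r' \<le> 6 * \<kappa> r"
proof -
  have mono: "mono_on {0..} \<kappa>" and conc: "concave_on {0..} \<kappa>" and pos: "\<forall>t\<ge>0. \<kappa> t \<ge> 1"
    using k by (auto simp: sublinear_fn_def)
  have "\<kappa> r' \<le> \<kappa> (6*r)" using mono_onD[OF mono] r by auto
  moreover have "(1 - 1/6) * \<kappa> 0 + (1/6) * \<kappa> (6*r) \<le> \<kappa> ((1 - 1/6) *\<^sub>R 0 + (1/6) *\<^sub>R (6*r))"
    by (rule concave_onD[OF conc]) (use r in auto)
  moreover have eq: "(1 - 1/6) *\<^sub>R (0::real) + (1/6) *\<^sub>R (6*r) = r" by simp
  moreover have "\<kappa> 0 \<ge> 1" using pos by auto
  ultimately have a: "\<kappa> r' \<le> \<kappa> (6 * r)" "5/6 * \<kappa> 0 + 1/6 * \<kappa> (6 * r) \<le> \<kappa> r" "1 \<le> \<kappa> 0"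
    by (simp_all only: eq) simp_all
  from a show ?thesis by linarith
qed

lemma closed_ray:
  fixes b :: "real \<Rightarrow> 'a::metric_space"
  assumes ray: "geodesic_ray b bp"
  shows "closed (b ` {0..})"
  unfolding closed_sequential_limits
proof (intro allI impI, elim conjE)
  fix x l assume xin: "\<forall>n. x n \<in> b ` {0..}" and lim: "x \<longlonglongrightarrow> l"
  define r where "r = (\<lambda>n. SOME t. t \<ge> 0 \<and> x n = b t)"
  have r: "r n \<ge> 0 \<and> x n = b (r n)" for n
  proof -
    have "\<exists>t. t \<ge> 0 \<and> x n = b t" using xin by auto
    then show ?thesis unfolding r_def by (rule someI_ex)
  qed
  have dr: "dist (r m) (r n) = dist (x m) (x n)" for m n
    using r[of m] r[of n] ray by (simp add: geodesic_ray_def dist_real_def)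
  have "Cauchy x" using lim by (rule LIMSEQ_imp_Cauchy)
  then have "Cauchy r" unfolding Cauchy_def dr .
  then obtain r0 where r0: "r \<longlonglongrightarrow> r0" using Cauchy_convergent convergent_def by blast
  have ev: "\<exists>N. \<forall>n\<ge>N. 0 \<le> r n" using r by blast
  have r0nn: "r0 \<ge> 0" by (rule LIMSEQ_le_const[OF r0 ev])
  have "(\<lambda>n. dist (r n) r0) \<longlonglongrightarrow> 0" using r0 by (rule tendsto_dist_iff[THEN iffD1])
  moreover have "dist (x n) (b r0) = dist (r n) r0" for n
    using r[of n] r0nn ray by (simp add: geodesic_ray_def dist_real_def)
  ultimately have "(\<lambda>n. dist (x n) (b r0)) \<longlonglongrightarrow> 0" by simp
  then have "x \<longlonglongrightarrow> b r0" by (rule tendsto_dist_iff[THEN iffD2])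
  then have "l = b r0" using lim LIMSEQ_unique by blast
  then show "l \<in> b ` {0..}" using r0nn by auto
qed

lemma diameter_le_metric:
  fixes S :: "'a::metric_space set"
  assumes "0 \<le> d" and "\<And>a c. a \<in> S \<Longrightarrow> c \<in> S \<Longrightarrow> dist a c \<le> d"
  shows "diameter S \<le> d"
proof (cases "S = {}")
  case True then show ?thesis using assms by (auto simp: diameter_def)
next
  case False
  then have "diameter S = (SUP (x,y)\<in>S\<times>S. dist x y)" by (simp add: diameter_def)
  also have "\<dots> \<le> d"
  proof (rule cSUP_least)
    show "S \<times> S \<noteq> {}" using False by auto
    fix pr assume "pr \<in> S \<times> S"
    then show "(case pr of (x, y) \<Rightarrow> dist x y) \<le> d" using assms(2) by auto
  qed
  finally show ?thesis .
qed



lemma pair_bound: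
  fixes b :: "real \<Rightarrow> 'a::metric_space" and bp :: 'a and \<kappa> :: "real \<Rightarrow> real" and M :: real
  assumes cat: "CAT0 TYPE('a)" and ray: "geodesic_ray b bp" and k: "sublinear_fn \<kappa>"
    and H: "\<And>\<beta> s t. s \<le> t \<Longrightarrow> quasi_geodesic_on 32 0 {s..t} \<beta> \<Longrightarrow>
           \<beta> s \<in> b ` {0..} \<Longrightarrow> \<beta> t \<in> b ` {0..} \<Longrightarrow>
           \<beta> ` {s..t} \<subseteq> kappa_nbhd \<kappa> bp (b ` {0..}) M"
    and Mnn: "0 \<le> M"
    and xy: "dist x y \<le> infdist x (b ` {0..})"
    and pn: "p \<in> nearest_points x (b ` {0..})" and qn: "q \<in> nearest_points y (b ` {0..})"
  shows "dist p q \<le> 18432 * M * \<kappa> (dist bp x)"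
proof -
  define Z where "Z = b ` {0..}"
  define D where "D = infdist x Z"
  define E where "E = infdist y Z"
  define L where "L = dist p q"
  define nx where "nx = dist bp x"
  have pZ: "p \<in> Z" and dxp: "dist x p = D" using pn by (auto simp: nearest_points_def Z_def D_def)
  have qZ: "q \<in> Z" and dyq: "dist y q = E" using qn by (auto simp: nearest_points_def Z_def E_def)
  have nearx: "\<forall>z\<in>Z. dist x p \<le> dist x z" using dxp by (auto simp: D_def infdist_le)
  have neary: "\<forall>z\<in>Z. dist y q \<le> dist y z" using dyq by (auto simp: E_def infdist_le)
  have bpZ: "bp \<in> Z" using ray by (force simp: Z_def geodesic_ray_def)
  have nx0: "0 \<le> nx" by (simp add: nx_def)
  have Dx: "D \<le> nx" using infdist_le[OF bpZ, of x] by (simp add: D_def nx_def dist_commute)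
  have xyD: "dist x y \<le> D" using xy by (simp add: D_def Z_def)
  have k1: "\<forall>t\<ge>0. \<kappa> t \<ge> 1" using k by (simp add: sublinear_fn_def)
  have Mk: "0 \<le> M * \<kappa> r" if "0 \<le> r" for r
  proof -
    have "1 \<le> \<kappa> r" using k1 that by blast
    then show ?thesis using Mnn by simp
  qed
  have kx: "0 \<le> M * \<kappa> nx" using Mk by (simp add: nx_def)
  have fin: "L \<le> 18432 * M * \<kappa> nx" if "L \<le> 3072 * (M * \<kappa> (dist bp x'))" "dist bp x' \<le> 6 * nx" for x'
  proof -
    have "\<kappa> (dist bp x') \<le> 6 * \<kappa> nx" using kappa6[OF k _ _ that(2)] by (simp add: nx_def)
    then have "M * \<kappa> (dist bp x') \<le> M * (6 * \<kappa> nx)" using Mnn by (rule mult_left_mono)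
    then show ?thesis using that(1) by simp
  qed
  show ?thesis
  proof (cases "L = 0")
    case True then show ?thesis using kx by (simp add: nx_def L_def)
  next
    case False
    then have Lp: "L > 0" by (simp add: L_def)
    show ?thesis
    proof (cases "dist x q < D + 7/8 * L")
      case True
      obtain x' where x': "dist bp x' \<le> dist bp p + dist x p" "dist p q \<le> 3072 * (M * \<kappa> (dist bp x'))"
        using tree_fail[OF cat ray H, of p q x] pZ qZ nearx Lp True dxp Mk
        by (auto simp: Z_def L_def)
      have "dist bp p \<le> nx + D" using dist_triangle[of bp p x] dxp by (simp add: nx_def)
      then have "dist bp x' \<le> 6 * nx" using x'(1) dxp Dx nx0 by linarith
      then have "L \<le> 18432 * M * \<kappa> nx" using fin x'(2) by (simp add: L_def)
      then show ?thesis by (simp add: L_def nx_def)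
    next
      case nota: False
      show ?thesis
      proof (cases "dist y p < E + 7/8 * L")
        case True
        obtain x' where x': "dist bp x' \<le> dist bp q + dist y q" "dist q p \<le> 3072 * (M * \<kappa> (dist bp x'))"
          using tree_fail[OF cat ray H, of q p y] pZ qZ neary Lp True dyq Mk
          by (auto simp: Z_def L_def dist_commute)
        have "dist bp q \<le> dist bp y + E" using dist_triangle[of bp q y] dyq by simp
        moreover have "dist bp y \<le> nx + D" using dist_triangle[of bp y x] xyD by (simp add: nx_def)
        moreover have "E \<le> 2 * D"
        proof -
          have "E \<le> dist y p" using neary pZ dyq by auto
          also have "\<dots> \<le> dist y x + dist x p" by (rule dist_triangle)
          finally show ?thesis using xyD dxp by (simp add: dist_commute)
        qed
        ultimately have "dist bp x' \<le> 6 * nx" using x'(1) dyq Dx nx0 by linarith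
        then have "L \<le> 18432 * M * \<kappa> nx" using fin x'(2) by (simp add: L_def dist_commute)
        then show ?thesis by (simp add: L_def nx_def)
      next
        case notb: False
        define P where "P = dist y p"
        have PE: "E + 7/8 * L \<le> P" using notb by (simp add: P_def)
        have E0: "0 \<le> E" by (simp add: E_def infdist_nonneg)
        have Pp: "P > 0" using PE Lp E0 by linarith
        have EP: "0 \<le> E" "E \<le> P" using PE Lp E0 by auto
        have gs: "\<forall>x y::'a. \<exists>g. geodesic_between g x y" using cat by (simp add: CAT0_def geodesic_space_def)
        obtain g where g: "geodesic_between g y p" using gs by blast
        define m where "m = g E"
        define l where "l = E / P"
        have l: "0 \<le> l" "l \<le> 1" using EP Pp by (auto simp: l_def)
        have cq: "(dist q m)\<^sup>2 \<le> (1 - l) * E\<^sup>2 + l * L\<^sup>2 - l * (1 - l) * P\<^sup>2"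
          using CN[OF cat g, of E q] EP dyq by (simp add: m_def l_def P_def L_def dist_commute)
        have "(1 - l) * E\<^sup>2 + l * L\<^sup>2 - l * (1 - l) * P\<^sup>2 = E * (L\<^sup>2 - (P - E)\<^sup>2) / P"
          using Pp by (simp add: l_def field_simps power2_eq_square)
        also have "\<dots> \<le> E * (15/64 * L\<^sup>2) / P"
        proof -
          have "(7/8*L)\<^sup>2 \<le> (P - E)\<^sup>2" using PE Lp by (intro power_mono) auto
          then have "L\<^sup>2 - (P - E)\<^sup>2 \<le> 15/64 * L\<^sup>2" by (simp add: power2_eq_square)
          then show ?thesis using EP Pp by (intro divide_right_mono mult_left_mono) auto
        qed
        also have "\<dots> \<le> (L/2)\<^sup>2"
        proof -
          have "E * (15/64 * L\<^sup>2) \<le> P * (15/64 * L\<^sup>2)" using EP by (intro mult_right_mono) auto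
          then have "E * (15/64 * L\<^sup>2) / P \<le> 15/64 * L\<^sup>2" using Pp by (simp add: divide_le_eq mult.commute)
          also have "\<dots> \<le> (L/2)\<^sup>2" by (simp add: power2_eq_square)
          finally show ?thesis .
        qed
        finally have "(dist q m)\<^sup>2 \<le> (L/2)\<^sup>2" using cq by linarith
        moreover have "0 \<le> L/2" using Lp by simp
        ultimately have dqm: "dist q m \<le> L/2" by (rule power2_le_imp_le)
        have cx: "(dist x m)\<^sup>2 \<le> (1 - l) * (dist x y)\<^sup>2 + l * D\<^sup>2 - l * (1 - l) * P\<^sup>2"
          using CN[OF cat g, of E x] EP dxp by (simp add: m_def l_def P_def)
        have "(dist x y)\<^sup>2 \<le> D\<^sup>2" using xyD by (intro power_mono) auto
        then have "(1 - l) * (dist x y)\<^sup>2 \<le> (1 - l) * D\<^sup>2" using l by (intro mult_left_mono) auto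
        moreover have "0 \<le> l * (1 - l) * P\<^sup>2" using l by (intro mult_nonneg_nonneg) auto
        moreover have "(1 - l) * D\<^sup>2 + l * D\<^sup>2 = D\<^sup>2" by (simp add: algebra_simps)
        ultimately have "(dist x m)\<^sup>2 \<le> D\<^sup>2" using cx by linarith
        moreover have "0 \<le> D" by (simp add: D_def infdist_nonneg)
        ultimately have dxm: "dist x m \<le> D" by (rule power2_le_imp_le)
        have "dist x q \<le> dist x m + dist m q" by (rule dist_triangle)
        then have "dist x q \<le> D + L/2" using dxm dqm by (simp add: dist_commute)
        then have False using nota Lp by simp
        then show ?thesis ..
      qed
    qed
  qed
qed

theorem theorem3p9:
  fixes b :: "real \<Rightarrow> 'a::metric_space" and bp :: 'a and \<kappa> :: "real \<Rightarrow> real" and M :: real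
  assumes "proper_metric TYPE('a)"
    and "CAT0 TYPE('a)"
    and "sublinear_fn \<kappa>"
    and "geodesic_ray b bp"
    and "\<And>\<beta> s t. s \<le> t \<Longrightarrow> quasi_geodesic_on 32 0 {s..t} \<beta> \<Longrightarrow>
           \<beta> s \<in> b ` {0..} \<Longrightarrow> \<beta> t \<in> b ` {0..} \<Longrightarrow>
           \<beta> ` {s..t} \<subseteq> kappa_nbhd \<kappa> bp (b ` {0..}) M"
  shows "kappa_contracting \<kappa> bp (b ` {0..}) (82000 * M)"
proof -
  note cat = assms(2) and k = assms(3) and ray = assms(4) and H = assms(5)
  have b0: "b 0 = bp" using ray by (simp add: geodesic_ray_def)
  have k0: "\<kappa> 0 \<ge> 1" using k by (simp add: sublinear_fn_def)
  have Mnn: "0 \<le> M"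
  proof -
    have "is_interval {0..0::real}" by (rule is_interval_cc)
    then have qg: "quasi_geodesic_on 32 0 {0..0} (\<lambda>_. bp)"
      by (simp add: quasi_geodesic_on_def)
    have "(\<lambda>_. bp) ` {0..0::real} \<subseteq> kappa_nbhd \<kappa> bp (b ` {0..}) M"
      using H[OF order_refl qg] b0 by force
    then have "bp \<in> kappa_nbhd \<kappa> bp (b ` {0..}) M" by auto
    then have "0 \<le> M * \<kappa> 0" using b0 by (force simp: kappa_nbhd_def)
    then show ?thesis using k0 by (simp add: zero_le_mult_iff)
  qed
  have k1: "\<forall>t\<ge>0. \<kappa> t \<ge> 1" using k by (simp add: sublinear_fn_def)
  have kx: "0 \<le> M * \<kappa> (dist bp x)" for x
  proof -
    have "1 \<le> \<kappa> (dist bp x)" using k1 by simp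
    then show ?thesis using Mnn by simp
  qed
  show ?thesis unfolding kappa_contracting_def
  proof (intro conjI allI impI)
    show "closed (b ` {0..})" by (rule closed_ray[OF ray])
    fix x y assume xy: "dist x y \<le> infdist x (b ` {0..})"
    have xx: "dist x x \<le> infdist x (b ` {0..})" by (simp add: infdist_nonneg)
    have uniq: "a = c" if "a \<in> nearest_points y (b ` {0..})" "c \<in> nearest_points y (b ` {0..})" for a c
    proof -
      have ne: "\<forall>z\<in>b ` {0..}. dist y a \<le> dist y z" using that(1) by (auto simp: nearest_points_def infdist_le)
      have aZ: "a \<in> b ` {0..}" and cZ: "c \<in> b ` {0..}" using that by (auto simp: nearest_points_def)
      have P: "(dist y a)\<^sup>2 + (dist a c)\<^sup>2 \<le> (dist y c)\<^sup>2"
        by (rule ray_right[OF cat ray ne aZ cZ])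
      moreover have "dist y a = dist y c" using that by (auto simp: nearest_points_def)
      ultimately have "(dist a c)\<^sup>2 \<le> 0" by simp
      then show ?thesis by simp
    qed
    have bnd: "dist a c \<le> 18432 * M * \<kappa> (dist bp x)"
      if ac: "a \<in> nearest_points x (b ` {0..}) \<union> nearest_points y (b ` {0..})"
         "c \<in> nearest_points x (b ` {0..}) \<union> nearest_points y (b ` {0..})" for a c
    proof -
      have z: "0 \<le> 18432 * M * \<kappa> (dist bp x)" using kx[of x] by simp
      consider "a \<in> nearest_points x (b ` {0..})" "c \<in> nearest_points x (b ` {0..})"
        | "a \<in> nearest_points x (b ` {0..})" "c \<in> nearest_points y (b ` {0..})"
        | "a \<in> nearest_points y (b ` {0..})" "c \<in> nearest_points x (b ` {0..})"
        | "a \<in> nearest_points y (b ` {0..})" "c \<in> nearest_points y (b ` {0..})"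
        using ac by blast
      then show ?thesis
      proof cases
        case 1 then show ?thesis using pair_bound[OF cat ray k H Mnn xx] by blast
      next
        case 2 then show ?thesis using pair_bound[OF cat ray k H Mnn xy] by blast
      next
        case 3
        then have "dist c a \<le> 18432 * M * \<kappa> (dist bp x)" using pair_bound[OF cat ray k H Mnn xy] by blast
        then show ?thesis by (simp add: dist_commute)
      next
        case 4
        then have "a = c" by (rule uniq)
        then show ?thesis using z by simp
      qed
    qed
    have "diameter (nearest_points x (b ` {0..}) \<union> nearest_points y (b ` {0..})) \<le> 18432 * M * \<kappa> (dist bp x)"
      by (rule diameter_le_metric) (use kx[of x] bnd in auto)
    also have "\<dots> \<le> 82000 * M * \<kappa> (dist bp x)"
      using kx[of x] by (simp add: mult.assoc mult_right_mono)
    finally show "diameter (nearest_points x (b ` {0..}) \<union> nearest_points y (b ` {0..})) \<le> 82000 * M * \<kappa> (dist bp x)" .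
  qed
qed


end
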